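(* Let $k$ be a field of characteristic not $2$, $R,S$ $k$-algebras and $\tau:S\otimes R\to R\otimes S$ a twisting map. Let $C_\bullet,C'_\bullet$ be $R$-bimodule resolutions of $R$ and $D_\bullet,D'_\bullet$ be $S$-bimodule resolutions of $S$, all compatible with $\tau$, and let $\psi_R:C_\bullet\to C'_\bullet$ and $\psi_S:D_\bullet\to D'_\bullet$ be chain maps of bimodule resolutions (lifting the identity) that are compatible with $\tau$. Then $\psi_R\otimes\psi_S:C_\bullet\otimes_\tau D_\bullet\to C'_\bullet\otimes_\tau D'_\bullet$ is a chain map of bimodule resolutions of $R\otimes_\tau S$ (lifting the identity on $R\otimes_\tau S$).
   Context: Tensor products are over $k$, with the Koszul sign convention for graded maps. A twisting map is a bijective $k$-linear $\tau:S\otimes R\to R\otimes S$ with $\tau(1_S\otimes r)=r\otimes1_S$, $\tau(s\otimes1_R)=1_R\otimes s$ and $\tau(m_S\otimes m_R)=(m_R\otimes m_S)(1\otimes\tau\otimes1)(\tau\otimes\tau)(1\otimes\tau\otimes1)$; $R\otimes_\tau S$ is $R\otimes S$ with multiplication $(m_R\otimes m_S)(1\otimes\tau\otimes1)$. A bimodule resolution of an algebra $A$ is a complex of $A$-bimodules $P_\bullet$ ($n\ge0$) with augmentation $P_0\to A$ making the augmented complex exact; a chain map of resolutions commutes with differentials and augmentations (lifts the identity of $A$). An $R$-bimodule resolution $C_\bullet$ of $R$ with action $\rho_C:R\otimes C\otimes R\to C$ is compatible with $\tau$ via a bijective chain map $\tau_C:S\otimes C_\bullet\to C_\bullet\otimes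 S$ lifting $\tau$ (in augmentation degree) such that $\tau_C(m_S\otimes1)=(1\otimes m_S)(\tau_C\otimes1)(1\otimes\tau_C)$ and $\tau_C(1\otimes\rho_C)=(\rho_C\otimes1)(1\otimes1\otimes\tau)(1\otimes\tau_C\otimes1)(\tau\otimes1\otimes1)$. An $S$-bimodule resolution $D_\bullet$ of $S$ with action $\rho_D$ is compatible with $\tau$ via a bijective chain map $\tau_D:D_\bullet\otimes R\to R\otimes D_\bullet$ lifting $\tau$ such that $\tau_D(1\otimes m_R)=(m_R\otimes1)(1\otimes\tau_D)(\tau_D\otimes1)$ and $\tau_D(\rho_D\otimes1)=(1\otimes\rho_D)(\tau\otimes1\otimes1)(1\otimes\tau_D\otimes1)(1\otimes1\otimes\tau)$ on $S\otimes D\otimes S\otimes R$. A chain map $\psi:C_\bullet\to C'_\bullet$ of compatible $R$-bimodule resolutions is compatible with $\tau$ if $(\psi\otimes1_S)\tau_C=\tau_{C'}(1_S\otimes\psi)$; a chain map $\psi:D_\bullet\to D'_\bullet$ of compatible $S$-bimodule resolutions is compatible with $\tau$ if $(1_R\otimes\psi)\tau_D=\tau_{D'}(\psi\otimes1_R)$. The twisted product resolution $C_\bullet\otimes_\tau D_\bullet$ is the total complex with $n$-th term $\bigoplus_{i+j=n}C_i\otimes D_j$, differential $\partial_C\otimes1+1\otimes\partial_D$, augmentation to $R\otimes S$ from those of $C_0$, $D_0$, and $(R\otimes_\tau S)$-bimodule structure $(\rho_C\otimes\rho_D)(1\otimes1\otimes\tau\otimes1\otimes1)(1\otimes\tau_C\otimes\tau_D\otimes1)$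 on $(R\otimes S)\otimes C_i\otimes D_j\otimes(R\otimes S)$; it is a bimodule resolution of $R\otimes_\tau S$. *)

theory Defs
  imports "HOL-Library.Poly_Mapping"
begin

text \<open>Every k-vector space has a basis, so we model a k-vector space with basis
  type 'b as the finitely supported functions from 'b to 'k.  The tensor product
  of the spaces with bases 'a and 'b is the space with basis 'a \<times> 'b.
  A k-linear map between such spaces is determined by the images of basis
  vectors; we represent it by that function (type lm).  n-fold tensor
  products are right-nested: A\<otimes>B\<otimes>C has basis 'a \<times> ('b \<times> 'c); the associators
  asl/asr (and the explicit regroupings below) are the canonical isomorphisms.\<close>

type_synonym ('a,'b,'k) lm = "'a \<Rightarrow> ('b \<Rightarrow>\<^sub>0 'k)"

definition smul :: "'k::field \<Rightarrow> ('b \<Rightarrow>\<^sub>0 'k) \<Rightarrow> ('b \<Rightarrow>\<^sub>0 'k)" where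
  "smul c u = Poly_Mapping.map (\<lambda>x. c * x) u"

definition basis :: "'a \<Rightarrow> ('a \<Rightarrow>\<^sub>0 'k::field)" where
  "basis a = Poly_Mapping.single a 1"

definition ext :: "('a,'b,'k::field) lm \<Rightarrow> ('a \<Rightarrow>\<^sub>0 'k) \<Rightarrow> ('b \<Rightarrow>\<^sub>0 'k)" where
  "ext f u = (\<Sum>a\<in>Poly_Mapping.keys u. smul (Poly_Mapping.lookup u a) (f a))"

definition tens :: "('a \<Rightarrow>\<^sub>0 'k::field) \<Rightarrow> ('b \<Rightarrow>\<^sub>0 'k) \<Rightarrow> ('a \<times> 'b \<Rightarrow>\<^sub>0 'k)" where
  "tens u v = (\<Sum>a\<in>Poly_Mapping.keys u. \<Sum>b\<in>Poly_Mapping.keys v. Poly_Mapping.single (a,b) (Poly_Mapping.lookup u a * Poly_Mapping.lookup v b))"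

definition compL :: "('b,'c,'k::field) lm \<Rightarrow> ('a,'b,'k) lm \<Rightarrow> ('a,'c,'k) lm" (infixl "\<circ>L" 55) where
  "g \<circ>L f = (\<lambda>a. ext g (f a))"

definition idL :: "('a,'a,'k::field) lm" where
  "idL = basis"

text \<open>Tensor product of linear maps of degree 0 (no Koszul sign arises).\<close>
definition tensL :: "('a,'c,'k::field) lm \<Rightarrow> ('b,'d,'k) lm \<Rightarrow> ('a \<times> 'b, 'c \<times> 'd, 'k) lm"
  (infixr "\<otimes>L" 70) where
  "f \<otimes>L g = (\<lambda>(a,b). tens (f a) (g b))"

definition asl :: "('a \<times> ('b \<times> 'c), ('a \<times> 'b) \<times> 'c, 'k::field) lm" where
  "asl = (\<lambda>(a,(b,c)). basis ((a,b),c))"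

definition asr :: "(('a \<times> 'b) \<times> 'c, 'a \<times> ('b \<times> 'c), 'k::field) lm" where
  "asr = (\<lambda>((a,b),c). basis (a,(b,c)))"

text \<open>1 \<otimes> f \<otimes> 1 on A\<otimes>B\<otimes>C\<otimes>D, f acting on B\<otimes>C.\<close>
definition mid4 :: "('b \<times> 'c, 'x \<times> 'y, 'k::field) lm \<Rightarrow>
    ('a \<times> ('b \<times> ('c \<times> 'd)), 'a \<times> ('x \<times> ('y \<times> 'd)), 'k) lm" where
  "mid4 f = idL \<otimes>L (asr \<circ>L (f \<otimes>L idL) \<circ>L asl)"

definition homog :: "('c \<Rightarrow> nat) \<Rightarrow> nat \<Rightarrow> ('c \<Rightarrow>\<^sub>0 'k::field) \<Rightarrow> bool" where
  "homog deg n u \<longleftrightarrow> (\<forall>c\<in>Poly_Mapping.keys u. deg c = n)"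

definition k_algebra :: "('a \<times> 'a, 'a, 'k::field) lm \<Rightarrow> ('a \<Rightarrow>\<^sub>0 'k) \<Rightarrow> bool" where
  "k_algebra m u \<longleftrightarrow>
     m \<circ>L (m \<otimes>L idL) \<circ>L asl = m \<circ>L (idL \<otimes>L m) \<and>
     (\<forall>a. ext m (tens u (basis a)) = basis a \<and> ext m (tens (basis a) u) = basis a)"

definition bim_grp :: "(('a \<times> 'a) \<times> ('m \<times> ('a \<times> 'a)), 'a \<times> (('a \<times> ('m \<times> 'a)) \<times> 'a), 'k::field) lm" where
  "bim_grp = (\<lambda>((a1,a2),(x,(a3,a4))). basis (a1,((a2,(x,a3)),a4)))"

definition bimodule :: "('a \<times> 'a, 'a, 'k::field) lm \<Rightarrow> ('a \<Rightarrow>\<^sub>0 'k) \<Rightarrow>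
    ('a \<times> ('m \<times> 'a), 'm, 'k) lm \<Rightarrow> bool" where
  "bimodule m u rho \<longleftrightarrow>
     rho \<circ>L (m \<otimes>L (idL \<otimes>L m)) = rho \<circ>L (idL \<otimes>L (rho \<otimes>L idL)) \<circ>L bim_grp \<and>
     (\<forall>x. ext rho (tens u (tens (basis x) u)) = basis x)"

definition reg_act :: "('a \<times> 'a, 'a, 'k::field) lm \<Rightarrow> ('a \<times> ('a \<times> 'a), 'a, 'k) lm" where
  "reg_act m = m \<circ>L (m \<otimes>L idL) \<circ>L asl"

text \<open>A graded space P = \<Oplus>_n P_n (basis 'p, degree function deg) with differential d,
  augmentation e : P_0 \<rightarrow> A and action rho is an A-bimodule resolution of A:
  a complex of A-bimodules (n \<ge> 0) whose augmented complex is exact.\<close>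
definition bimod_resolution :: "('a \<times> 'a, 'a, 'k::field) lm \<Rightarrow> ('a \<Rightarrow>\<^sub>0 'k) \<Rightarrow>
    ('p \<Rightarrow> nat) \<Rightarrow> ('p, 'p, 'k) lm \<Rightarrow> ('p, 'a, 'k) lm \<Rightarrow> ('a \<times> ('p \<times> 'a), 'p, 'k) lm \<Rightarrow> bool" where
  "bimod_resolution m u deg d e rho \<longleftrightarrow>
     bimodule m u rho \<and>
     (\<forall>a x b. homog deg (deg x) (rho (a,(x,b)))) \<and>
     (\<forall>x. homog deg (deg x - 1) (d x)) \<and>
     (\<forall>x. deg x = 0 \<longrightarrow> d x = 0) \<and>
     (\<forall>x. deg x \<noteq> 0 \<longrightarrow> e x = 0) \<and>
     d \<circ>L d = (\<lambda>_. 0) \<and>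
     e \<circ>L d = (\<lambda>_. 0) \<and>
     d \<circ>L rho = rho \<circ>L (idL \<otimes>L (d \<otimes>L idL)) \<and>
     e \<circ>L rho = reg_act m \<circ>L (idL \<otimes>L (e \<otimes>L idL)) \<and>
     (\<forall>y. \<exists>v. homog deg 0 v \<and> ext e v = y) \<and>
     (\<forall>v. homog deg 0 v \<and> ext e v = 0 \<longrightarrow> (\<exists>w. homog deg 1 w \<and> ext d w = v)) \<and>
     (\<forall>n v. n \<ge> 1 \<and> homog deg n v \<and> ext d v = 0 \<longrightarrow> (\<exists>w. homog deg (n+1) w \<and> ext d w = v))"

definition res_map :: "('p \<Rightarrow> nat) \<Rightarrow> ('p, 'p, 'k::field) lm \<Rightarrow> ('p, 'a, 'k) lm \<Rightarrow> ('a \<times> ('p \<times> 'a), 'p, 'k) lm \<Rightarrow>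
    ('q \<Rightarrow> nat) \<Rightarrow> ('q, 'q, 'k) lm \<Rightarrow> ('q, 'a, 'k) lm \<Rightarrow> ('a \<times> ('q \<times> 'a), 'q, 'k) lm \<Rightarrow>
    ('p, 'q, 'k) lm \<Rightarrow> bool" where
  "res_map degP dP eP rhoP degQ dQ eQ rhoQ psi \<longleftrightarrow>
     (\<forall>x. homog degQ (degP x) (psi x)) \<and>
     dQ \<circ>L psi = psi \<circ>L dP \<and>
     eQ \<circ>L psi = eP \<and>
     psi \<circ>L rhoP = rhoQ \<circ>L (idL \<otimes>L (psi \<otimes>L idL))"

definition twisting_map :: "('r \<times> 'r, 'r, 'k::field) lm \<Rightarrow> ('r \<Rightarrow>\<^sub>0 'k) \<Rightarrow>
    ('s \<times> 's, 's, 'k) lm \<Rightarrow> ('s \<Rightarrow>\<^sub>0 'k) \<Rightarrow> ('s \<times> 'r, 'r \<times> 's, 'k) lm \<Rightarrow> bool" where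
  "twisting_map mR uR mS uS tau \<longleftrightarrow>
     bij (ext tau) \<and>
     (\<forall>r. ext tau (tens uS (basis r)) = tens (basis r) uS) \<and>
     (\<forall>s. ext tau (tens (basis s) uR) = tens uR (basis s)) \<and>
     tau \<circ>L (mS \<otimes>L mR) \<circ>L asl =
       (mR \<otimes>L mS) \<circ>L asl \<circ>L mid4 tau \<circ>L asr \<circ>L (tau \<otimes>L tau) \<circ>L asl \<circ>L mid4 tau"

definition compatible_R :: "('r \<times> 'r, 'r, 'k::field) lm \<Rightarrow> ('s \<times> 's, 's, 'k) lm \<Rightarrow>
    ('s \<times> 'r, 'r \<times> 's, 'k) lm \<Rightarrow> ('c \<Rightarrow> nat) \<Rightarrow> ('c, 'c, 'k) lm \<Rightarrow> ('c, 'r, 'k) lm \<Rightarrow>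
    ('r \<times> ('c \<times> 'r), 'c, 'k) lm \<Rightarrow> ('s \<times> 'c, 'c \<times> 's, 'k) lm \<Rightarrow> bool" where
  "compatible_R mR mS tau degC dC eC rhoC tauC \<longleftrightarrow>
     bij (ext tauC) \<and>
     (\<forall>s c. \<forall>p\<in>Poly_Mapping.keys (tauC (s,c)). degC (fst p) = degC c) \<and>
     (dC \<otimes>L idL) \<circ>L tauC = tauC \<circ>L (idL \<otimes>L dC) \<and>
     (eC \<otimes>L idL) \<circ>L tauC = tau \<circ>L (idL \<otimes>L eC) \<and>
     tauC \<circ>L (mS \<otimes>L idL) \<circ>L asl =
       (idL \<otimes>L mS) \<circ>L asr \<circ>L (tauC \<otimes>L idL) \<circ>L asl \<circ>L (idL \<otimes>L tauC) \<and>
     tauC \<circ>L (idL \<otimes>L rhoC) =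
       (rhoC \<otimes>L idL) \<circ>L asl \<circ>L (idL \<otimes>L asl) \<circ>L (idL \<otimes>L (idL \<otimes>L tau)) \<circ>L mid4 tauC
         \<circ>L asr \<circ>L (tau \<otimes>L idL) \<circ>L asl"

definition compatible_S :: "('r \<times> 'r, 'r, 'k::field) lm \<Rightarrow> ('s \<times> 's, 's, 'k) lm \<Rightarrow>
    ('s \<times> 'r, 'r \<times> 's, 'k) lm \<Rightarrow> ('d \<Rightarrow> nat) \<Rightarrow> ('d, 'd, 'k) lm \<Rightarrow> ('d, 's, 'k) lm \<Rightarrow>
    ('s \<times> ('d \<times> 's), 'd, 'k) lm \<Rightarrow> ('d \<times> 'r, 'r \<times> 'd, 'k) lm \<Rightarrow> bool" where
  "compatible_S mR mS tau degD dD eD rhoD tauD \<longleftrightarrow>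
     bij (ext tauD) \<and>
     (\<forall>d r. \<forall>p\<in>Poly_Mapping.keys (tauD (d,r)). degD (snd p) = degD d) \<and>
     (idL \<otimes>L dD) \<circ>L tauD = tauD \<circ>L (dD \<otimes>L idL) \<and>
     (idL \<otimes>L eD) \<circ>L tauD = tau \<circ>L (eD \<otimes>L idL) \<and>
     tauD \<circ>L (idL \<otimes>L mR) =
       (mR \<otimes>L idL) \<circ>L asl \<circ>L (idL \<otimes>L tauD) \<circ>L asr \<circ>L (tauD \<otimes>L idL) \<circ>L asl \<and>
     tauD \<circ>L (rhoD \<otimes>L idL) \<circ>L asl \<circ>L (idL \<otimes>L asl) =
       (idL \<otimes>L rhoD) \<circ>L asr \<circ>L (tau \<otimes>L idL) \<circ>L asl \<circ>L mid4 tauD \<circ>L (idL \<otimes>L (idL \<otimes>L tau))"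

definition tw_deg :: "('c \<Rightarrow> nat) \<Rightarrow> ('d \<Rightarrow> nat) \<Rightarrow> 'c \<times> 'd \<Rightarrow> nat" where
  "tw_deg degC degD = (\<lambda>(c,d). degC c + degD d)"

definition tw_diff :: "('c \<Rightarrow> nat) \<Rightarrow> ('c, 'c, 'k::field) lm \<Rightarrow> ('d, 'd, 'k) lm \<Rightarrow> ('c \<times> 'd, 'c \<times> 'd, 'k) lm" where
  "tw_diff degC dC dD = (\<lambda>(c,d). tens (dC c) (basis d) + smul ((-1) ^ degC c) (tens (basis c) (dD d)))"

definition tw_aug :: "('c, 'r, 'k::field) lm \<Rightarrow> ('d, 's, 'k) lm \<Rightarrow> ('c \<times> 'd, 'r \<times> 's, 'k) lm" where
  "tw_aug eC eD = eC \<otimes>L eD"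

definition tw_g1 :: "(('r \<times> 's) \<times> (('c \<times> 'd) \<times> ('r \<times> 's)), 'r \<times> ((('s \<times> 'c) \<times> ('d \<times> 'r)) \<times> 's), 'k::field) lm" where
  "tw_g1 = (\<lambda>((r,s),((c,d),(r',s'))). basis (r,(((s,c),(d,r')),s')))"

definition tw_g2 :: "('r \<times> ((('c \<times> 's) \<times> ('r \<times> 'd)) \<times> 's), 'r \<times> ('c \<times> (('s \<times> 'r) \<times> ('d \<times> 's))), 'k::field) lm" where
  "tw_g2 = (\<lambda>(r,(((c,s),(r',d)),s')). basis (r,(c,((s,r'),(d,s')))))"

definition tw_g3 :: "('r \<times> ('c \<times> (('r \<times> 's) \<times> ('d \<times> 's))), ('r \<times> ('c \<times> 'r)) \<times> ('s \<times> ('d \<times> 's)), 'k::field) lm" where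
  "tw_g3 = (\<lambda>(r,(c,((r',s),(d,s')))). basis ((r,(c,r')),(s,(d,s'))))"

text \<open>(R\<otimes>_tau S)-bimodule structure (rho_C \<otimes> rho_D)(1\<otimes>1\<otimes>tau\<otimes>1\<otimes>1)(1\<otimes>tau_C\<otimes>tau_D\<otimes>1).\<close>
definition tw_act :: "('s \<times> 'r, 'r \<times> 's, 'k::field) lm \<Rightarrow> ('r \<times> ('c \<times> 'r), 'c, 'k) lm \<Rightarrow>
    ('s \<times> ('d \<times> 's), 'd, 'k) lm \<Rightarrow> ('s \<times> 'c, 'c \<times> 's, 'k) lm \<Rightarrow> ('d \<times> 'r, 'r \<times> 'd, 'k) lm \<Rightarrow>
    (('r \<times> 's) \<times> (('c \<times> 'd) \<times> ('r \<times> 's)), 'c \<times> 'd, 'k) lm" where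
  "tw_act tau rhoC rhoD tauC tauD =
     (rhoC \<otimes>L rhoD) \<circ>L tw_g3 \<circ>L (idL \<otimes>L (idL \<otimes>L (tau \<otimes>L idL))) \<circ>L tw_g2
       \<circ>L (idL \<otimes>L ((tauC \<otimes>L tauD) \<otimes>L idL)) \<circ>L tw_g1"

end

theory Submission
  imports Defs
begin

lemma lookup_smul[simp]: "Poly_Mapping.lookup (smul c u) k = c * Poly_Mapping.lookup u k"
  by (simp add: smul_def Poly_Mapping.map.rep_eq when_def)

lemma pm_eqI2: "(\<And>a b. Poly_Mapping.lookup f (a,b) = Poly_Mapping.lookup g (a,b)) \<Longrightarrow> f = g"
  by (rule poly_mapping_eqI) auto

lemma lookup_tens[simp]: "Poly_Mapping.lookup (tens u v) (a,b) = Poly_Mapping.lookup u a * Poly_Mapping.lookup v b"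
proof -
  have "Poly_Mapping.lookup (tens u v) (a,b) = (\<Sum>p\<in>Poly_Mapping.keys u \<times> Poly_Mapping.keys v. (if p = (a,b) then Poly_Mapping.lookup u (fst p) * Poly_Mapping.lookup v (snd p) else 0))"
    unfolding tens_def lookup_sum lookup_single when_def sum.cartesian_product by (intro sum.cong refl) (auto simp: lookup_single when_def split: if_splits)
  also have "\<dots> = Poly_Mapping.lookup u a * Poly_Mapping.lookup v b"
    by (subst sum.delta) (auto simp: in_keys_iff)
  finally show ?thesis .
qed

lemma keys_tens: "Poly_Mapping.keys (tens u v) \<subseteq> Poly_Mapping.keys u \<times> Poly_Mapping.keys v"
  by (auto simp: in_keys_iff)

lemma ext_superset: "finite A \<Longrightarrow> Poly_Mapping.keys u \<subseteq> A \<Longrightarrow> ext f u = (\<Sum>a\<in>A. smul (Poly_Mapping.lookup u a) (f a))"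
  unfolding ext_def
  by (rule sum.mono_neutral_left) (auto simp: in_keys_iff intro!: poly_mapping_eqI)

lemma lookup_ext: "finite A \<Longrightarrow> Poly_Mapping.keys u \<subseteq> A \<Longrightarrow> Poly_Mapping.lookup (ext f u) y = (\<Sum>a\<in>A. Poly_Mapping.lookup u a * Poly_Mapping.lookup (f a) y)"
  by (simp add: ext_superset lookup_sum)

lemma lookup_ext': "Poly_Mapping.lookup (ext f u) y = (\<Sum>a\<in>Poly_Mapping.keys u. Poly_Mapping.lookup u a * Poly_Mapping.lookup (f a) y)"
  by (simp add: lookup_ext)

lemma ext_add: "ext f (u + v) = ext f u + ext f v"
proof (rule poly_mapping_eqI)
  fix y
  let ?A = "Poly_Mapping.keys u \<union> Poly_Mapping.keys v"
  have f: "finite ?A" by simp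
  have k: "Poly_Mapping.keys (u+v) \<subseteq> ?A" by (auto simp: in_keys_iff lookup_add)
  have 1: "Poly_Mapping.lookup (ext f (u + v)) y = (\<Sum>a\<in>?A. Poly_Mapping.lookup (u+v) a * Poly_Mapping.lookup (f a) y)"
    by (rule lookup_ext[OF f k])
  have 2: "Poly_Mapping.lookup (ext f u) y = (\<Sum>a\<in>?A. Poly_Mapping.lookup u a * Poly_Mapping.lookup (f a) y)"
    by (rule lookup_ext[OF f]) auto
  have 3: "Poly_Mapping.lookup (ext f v) y = (\<Sum>a\<in>?A. Poly_Mapping.lookup v a * Poly_Mapping.lookup (f a) y)"
    by (rule lookup_ext[OF f]) auto
  show "Poly_Mapping.lookup (ext f (u + v)) y = Poly_Mapping.lookup (ext f u + ext f v) y"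
    unfolding lookup_add 1 2 3
    by (simp add: lookup_add distrib_right sum.distrib)
qed

lemma ext_smul: "ext f (smul c u) = smul c (ext f u)"
proof (rule poly_mapping_eqI)
  fix y
  have k: "Poly_Mapping.keys (smul c u) \<subseteq> Poly_Mapping.keys u" by (auto simp: in_keys_iff)
  have 1: "Poly_Mapping.lookup (ext f (smul c u)) y = (\<Sum>a\<in>Poly_Mapping.keys u. Poly_Mapping.lookup (smul c u) a * Poly_Mapping.lookup (f a) y)"
    by (rule lookup_ext[OF finite_keys k])
  show "Poly_Mapping.lookup (ext f (smul c u)) y = Poly_Mapping.lookup (smul c (ext f u)) y"
    unfolding 1 by (simp add: lookup_ext' sum_distrib_left mult.assoc)
qed

lemma ext_zero[simp]: "ext f 0 = 0"
  by (simp add: ext_def)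

lemma ext_sum: "ext f (sum g A) = (\<Sum>a\<in>A. ext f (g a))"
  by (induction A rule: infinite_finite_induct) (auto simp: ext_add)

lemma smul0[simp]: "smul 0 u = 0"
  by (rule poly_mapping_eqI) simp

lemma smul_zero[simp]: "smul c 0 = 0"
  by (rule poly_mapping_eqI) simp

lemma ext_single: "ext f (Poly_Mapping.single a c) = smul c (f a)"
  by (simp add: ext_def)

lemma ext_basis[simp]: "ext f (basis a) = f a"
  by (simp add: ext_def basis_def smul_def poly_mapping_eqI Poly_Mapping.map.rep_eq when_def)

lemma ext_comp: "ext (g \<circ>L f) u = ext g (ext f u)"
  unfolding ext_def[of "g \<circ>L f" u] ext_def[of f u] by (simp add: ext_sum ext_smul compL_def)

lemma compL_assoc: "(h \<circ>L g) \<circ>L f = h \<circ>L (g \<circ>L f)"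
  unfolding compL_def[of "h \<circ>L g" f] ext_comp by (simp add: compL_def)

lemma ext_idL[simp]: "ext idL u = u"
proof (rule poly_mapping_eqI)
  fix k
  have "Poly_Mapping.lookup (ext idL u) k = (\<Sum>a\<in>Poly_Mapping.keys u. if a = k then Poly_Mapping.lookup u a else 0)"
    unfolding lookup_ext' by (intro sum.cong refl) (simp add: idL_def basis_def lookup_single when_def)
  also have "\<dots> = Poly_Mapping.lookup u k" by (subst sum.delta) (auto simp: in_keys_iff)
  finally show "Poly_Mapping.lookup (ext idL u) k = Poly_Mapping.lookup u k" .
qed

lemma idL_comp[simp]: "idL \<circ>L f = f"
  by (simp add: compL_def)

lemma comp_idL[simp]: "f \<circ>L idL = f"
  by (simp add: compL_def idL_def)

lemma tens_basis: "tens (basis a) (basis b) = basis (a,b)"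
  by (rule pm_eqI2) (simp add: basis_def lookup_single when_def)

lemma idL_tens[simp]: "idL \<otimes>L idL = idL"
  by (simp add: tensL_def idL_def tens_basis fun_eq_iff)

lemma tensL_apply[simp]: "(f \<otimes>L g) (a,b) = tens (f a) (g b)"
  by (simp add: tensL_def)

lemma sum_prod_split: "(\<Sum>p\<in>A\<times>B. F p) = (\<Sum>x\<in>A. \<Sum>y\<in>B. F (x,y))"
  by (subst sum.cartesian_product) (simp add: split_def)

lemma ext_tensL: "ext (f \<otimes>L g) (tens u v) = tens (ext f u) (ext g v)"
proof (rule pm_eqI2)
  fix a b
  have k: "Poly_Mapping.keys (tens u v) \<subseteq> Poly_Mapping.keys u \<times> Poly_Mapping.keys v" by (rule keys_tens)
  have 1: "Poly_Mapping.lookup (ext (f \<otimes>L g) (tens u v)) (a, b) = (\<Sum>p\<in>Poly_Mapping.keys u \<times> Poly_Mapping.keys v. Poly_Mapping.lookup (tens u v) p * Poly_Mapping.lookup ((f \<otimes>L g) p) (a,b))"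
    by (rule lookup_ext[OF _ k]) simp
  show "Poly_Mapping.lookup (ext (f \<otimes>L g) (tens u v)) (a, b) = Poly_Mapping.lookup (tens (ext f u) (ext g v)) (a, b)"
    unfolding 1 sum_prod_split
    by (simp add: lookup_ext' sum_product sum_distrib_left sum_distrib_right mult_ac) (rule sum.swap)
qed

lemma tensL_comp: "(f \<otimes>L g) \<circ>L (h \<otimes>L k) = (f \<circ>L h) \<otimes>L (g \<circ>L k)"
  by (simp add: compL_def fun_eq_iff ext_tensL)

lemma relabel: assumes "\<And>x. \<sigma> (\<pi> x) = x" "\<And>y. \<pi> (\<sigma> y) = y"
  shows "Poly_Mapping.lookup (ext (\<lambda>x. basis (\<pi> x)) u) y = Poly_Mapping.lookup u (\<sigma> y)"
proof -
  have "Poly_Mapping.lookup (ext (\<lambda>x. basis (\<pi> x)) u) y = (\<Sum>a\<in>Poly_Mapping.keys u. if a = \<sigma> y then Poly_Mapping.lookup u a else 0)"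
    unfolding lookup_ext' basis_def lookup_single when_def
    by (intro sum.cong refl) (metis assms mult.right_neutral mult_zero_right)
  also have "\<dots> = Poly_Mapping.lookup u (\<sigma> y)" by (simp add: in_keys_iff)
  finally show ?thesis .
qed

lemma g1_apply[simp]: "tw_g1 ((r,s),((c,d),(r',s'))) = basis (r,(((s,c),(d,r')),s'))"
  by (simp add: tw_g1_def)
lemma g2_apply[simp]: "tw_g2 (r,(((c,s),(r',d)),s')) = basis (r,(c,((s,r'),(d,s'))))"
  by (simp add: tw_g2_def)
lemma g3_apply[simp]: "tw_g3 (r,(c,((r',s),(d,s')))) = basis ((r,(c,r')),(s,(d,s')))"
  by (simp add: tw_g3_def)

lemma g1_lookup: "Poly_Mapping.lookup (ext tw_g1 u) (r,(((s,c),(d,r')),s')) = Poly_Mapping.lookup u ((r,s),((c,d),(r',s')))"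
proof -
  have e: "tw_g1 = (\<lambda>x. basis ((\<lambda>((r,s),((c,d),(r',s'))). (r,(((s,c),(d,r')),s'))) x))"
    by (simp add: tw_g1_def fun_eq_iff split_paired_all)
  show ?thesis unfolding e
    by (subst relabel[where \<sigma>="\<lambda>(r,(((s,c),(d,r')),s')). ((r,s),((c,d),(r',s')))"], auto)
qed

lemma g2_lookup: "Poly_Mapping.lookup (ext tw_g2 u) (r,(c,((s,r'),(d,s')))) = Poly_Mapping.lookup u (r,(((c,s),(r',d)),s'))"
proof -
  have e: "tw_g2 = (\<lambda>x. basis ((\<lambda>(r,(((c,s),(r',d)),s')). (r,(c,((s,r'),(d,s'))))) x))"
    by (simp add: tw_g2_def fun_eq_iff split_paired_all)
  show ?thesis unfolding e
    by (subst relabel[where \<sigma>="\<lambda>(r,(c,((s,r'),(d,s')))). (r,(((c,s),(r',d)),s'))"], auto)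
qed

lemma g3_lookup: "Poly_Mapping.lookup (ext tw_g3 u) ((r,(c,r')),(s,(d,s'))) = Poly_Mapping.lookup u (r,(c,((r',s),(d,s'))))"
proof -
  have e: "tw_g3 = (\<lambda>x. basis ((\<lambda>(r,(c,((r',s),(d,s')))). ((r,(c,r')),(s,(d,s')))) x))"
    by (simp add: tw_g3_def fun_eq_iff split_paired_all)
  show ?thesis unfolding e
    by (subst relabel[where \<sigma>="\<lambda>((r,(c,r')),(s,(d,s'))). (r,(c,((r',s),(d,s'))))"], auto)
qed

lemma g1_nat: "tw_g1 \<circ>L ((a \<otimes>L b) \<otimes>L ((c \<otimes>L d) \<otimes>L (e \<otimes>L f))) = (a \<otimes>L (((b \<otimes>L c) \<otimes>L (d \<otimes>L e)) \<otimes>L f)) \<circ>L tw_g1"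
  unfolding fun_eq_iff compL_def
  by (auto intro!: poly_mapping_eqI simp: g1_lookup mult_ac)

lemma g2_nat: "tw_g2 \<circ>L (a \<otimes>L (((b \<otimes>L c) \<otimes>L (d \<otimes>L e)) \<otimes>L f)) = (a \<otimes>L (b \<otimes>L ((c \<otimes>L d) \<otimes>L (e \<otimes>L f)))) \<circ>L tw_g2"
  unfolding fun_eq_iff compL_def
  by (auto intro!: poly_mapping_eqI simp: g2_lookup mult_ac)

lemma g3_nat: "tw_g3 \<circ>L (a \<otimes>L (b \<otimes>L ((c \<otimes>L d) \<otimes>L (e \<otimes>L f)))) = ((a \<otimes>L (b \<otimes>L c)) \<otimes>L (d \<otimes>L (e \<otimes>L f))) \<circ>L tw_g3"
  unfolding fun_eq_iff compL_def
  by (auto intro!: poly_mapping_eqI simp: g3_lookup mult_ac)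

lemma smul_add: "smul c (x + y) = smul c x + smul c y"
  by (rule poly_mapping_eqI) (simp add: lookup_add distrib_left)

lemma smul_smul: "smul c (smul d x) = smul (c * d) x"
  by (rule poly_mapping_eqI) (simp add: mult.assoc)

lemma smul_sum: "smul c (sum g A) = (\<Sum>a\<in>A. smul c (g a))"
  by (induction A rule: infinite_finite_induct) (auto simp: smul_add)

lemma ext_plus_fun: "ext (\<lambda>x. f x + g x) u = ext f u + ext g u"
  unfolding ext_def by (simp add: smul_add sum.distrib)

lemma ext_smul_fun: "(\<forall>a\<in>Poly_Mapping.keys u. h a = c) \<Longrightarrow> ext (\<lambda>x. smul (h x) (f x)) u = smul c (ext f u)"
  unfolding ext_def by (simp add: smul_sum smul_smul mult.commute)

lemma comp_rewr: "A \<circ>L B = C \<circ>L D \<Longrightarrow> A \<circ>L (B \<circ>L Z) = C \<circ>L (D \<circ>L Z)"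
  by (metis compL_assoc)

lemma tw_diff_alt: "tw_diff degC dC dD = (\<lambda>x. (dC \<otimes>L idL) x + smul ((-1) ^ degC (fst x)) ((idL \<otimes>L dD) x))"
  by (simp add: tw_diff_def fun_eq_iff idL_def)

theorem lemma7p3:
  fixes mR :: "('r \<times> 'r, 'r, 'k::field) lm" and uR :: "'r \<Rightarrow>\<^sub>0 'k"
    and mS :: "('s \<times> 's, 's, 'k) lm" and uS :: "'s \<Rightarrow>\<^sub>0 'k"
    and tau :: "('s \<times> 'r, 'r \<times> 's, 'k) lm"
    and degC :: "'c \<Rightarrow> nat" and dC :: "('c, 'c, 'k) lm" and eC :: "('c, 'r, 'k) lm"
    and rhoC :: "('r \<times> ('c \<times> 'r), 'c, 'k) lm" and tauC :: "('s \<times> 'c, 'c \<times> 's, 'k) lm"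
    and degC' :: "'c2 \<Rightarrow> nat" and dC' :: "('c2, 'c2, 'k) lm" and eC' :: "('c2, 'r, 'k) lm"
    and rhoC' :: "('r \<times> ('c2 \<times> 'r), 'c2, 'k) lm" and tauC' :: "('s \<times> 'c2, 'c2 \<times> 's, 'k) lm"
    and degD :: "'d \<Rightarrow> nat" and dD :: "('d, 'd, 'k) lm" and eD :: "('d, 's, 'k) lm"
    and rhoD :: "('s \<times> ('d \<times> 's), 'd, 'k) lm" and tauD :: "('d \<times> 'r, 'r \<times> 'd, 'k) lm"
    and degD' :: "'d2 \<Rightarrow> nat" and dD' :: "('d2, 'd2, 'k) lm" and eD' :: "('d2, 's, 'k) lm"
    and rhoD' :: "('s \<times> ('d2 \<times> 's), 'd2, 'k) lm" and tauD' :: "('d2 \<times> 'r, 'r \<times> 'd2, 'k) lm"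
    and psiR :: "('c, 'c2, 'k) lm" and psiS :: "('d, 'd2, 'k) lm"
  assumes char: "CHAR('k) \<noteq> 2"
    and algR: "k_algebra mR uR" and algS: "k_algebra mS uS"
    and tw: "twisting_map mR uR mS uS tau"
    and resC: "bimod_resolution mR uR degC dC eC rhoC"
    and resC': "bimod_resolution mR uR degC' dC' eC' rhoC'"
    and resD: "bimod_resolution mS uS degD dD eD rhoD"
    and resD': "bimod_resolution mS uS degD' dD' eD' rhoD'"
    and cC: "compatible_R mR mS tau degC dC eC rhoC tauC"
    and cC': "compatible_R mR mS tau degC' dC' eC' rhoC' tauC'"
    and cD: "compatible_S mR mS tau degD dD eD rhoD tauD"
    and cD': "compatible_S mR mS tau degD' dD' eD' rhoD' tauD'"
    and psiR: "res_map degC dC eC rhoC degC' dC' eC' rhoC' psiR"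
    and psiS: "res_map degD dD eD rhoD degD' dD' eD' rhoD' psiS"
    and psiR_tw: "(psiR \<otimes>L idL) \<circ>L tauC = tauC' \<circ>L (idL \<otimes>L psiR)"
    and psiS_tw: "(idL \<otimes>L psiS) \<circ>L tauD = tauD' \<circ>L (psiS \<otimes>L idL)"
  shows "res_map (tw_deg degC degD) (tw_diff degC dC dD) (tw_aug eC eD) (tw_act tau rhoC rhoD tauC tauD)
                 (tw_deg degC' degD') (tw_diff degC' dC' dD') (tw_aug eC' eD') (tw_act tau rhoC' rhoD' tauC' tauD')
                 (psiR \<otimes>L psiS)"
proof -
  from psiR have homR: "\<And>x. homog degC' (degC x) (psiR x)" and dR: "dC' \<circ>L psiR = psiR \<circ>L dC"
    and eR: "eC' \<circ>L psiR = eC" and rhoR: "psiR \<circ>L rhoC = rhoC' \<circ>L (idL \<otimes>L (psiR \<otimes>L idL))"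
    unfolding res_map_def by auto
  from psiS have homS: "\<And>x. homog degD' (degD x) (psiS x)" and dS: "dD' \<circ>L psiS = psiS \<circ>L dD"
    and eS: "eD' \<circ>L psiS = eD" and rhoS: "psiS \<circ>L rhoD = rhoD' \<circ>L (idL \<otimes>L (psiS \<otimes>L idL))"
    unfolding res_map_def by auto
  have P1: "\<forall>x. homog (tw_deg degC' degD') (tw_deg degC degD x) ((psiR \<otimes>L psiS) x)"
  proof
    fix x show "homog (tw_deg degC' degD') (tw_deg degC degD x) ((psiR \<otimes>L psiS) x)"
    proof (cases x)
      case (Pair c d)
      show ?thesis unfolding Pair homog_def tw_deg_def
        using keys_tens[of "psiR c" "psiS d"] homR[of c] homS[of d]
        by (auto simp: homog_def)
    qed
  qed
  have P2: "tw_diff degC' dC' dD' \<circ>L (psiR \<otimes>L psiS) = (psiR \<otimes>L psiS) \<circ>L tw_diff degC dC dD"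
  proof (rule ext)
    fix x show "(tw_diff degC' dC' dD' \<circ>L (psiR \<otimes>L psiS)) x = ((psiR \<otimes>L psiS) \<circ>L tw_diff degC dC dD) x"
    proof (cases x)
      case (Pair c d)
      have k: "\<forall>a\<in>Poly_Mapping.keys (tens (psiR c) (psiS d)). (-1) ^ degC' (fst a) = ((-1) ^ degC c :: 'k)"
        using keys_tens[of "psiR c" "psiS d"] homR[of c] by (auto simp: homog_def)
      have a: "ext dC' (psiR c) = ext psiR (dC c)" using dR unfolding compL_def fun_eq_iff by auto
      have b: "ext dD' (psiS d) = ext psiS (dD d)" using dS unfolding compL_def fun_eq_iff by auto
      have "(tw_diff degC' dC' dD' \<circ>L (psiR \<otimes>L psiS)) x
          = tens (ext dC' (psiR c)) (psiS d) + smul ((-1) ^ degC c) (tens (psiR c) (ext dD' (psiS d)))"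
        unfolding Pair compL_def tensL_apply tw_diff_alt ext_plus_fun ext_smul_fun[OF k] ext_tensL ext_idL ..
      also have "\<dots> = ((psiR \<otimes>L psiS) \<circ>L tw_diff degC dC dD) x"
        unfolding Pair a b compL_def by (simp add: tw_diff_def ext_add ext_smul ext_tensL)
      finally show ?thesis .
    qed
  qed
  have P3: "tw_aug eC' eD' \<circ>L (psiR \<otimes>L psiS) = tw_aug eC eD"
    unfolding tw_aug_def tensL_comp eR eS ..
  have s1: "tw_g1 \<circ>L (idL \<otimes>L ((psiR \<otimes>L psiS) \<otimes>L idL)) = (idL \<otimes>L (((idL \<otimes>L psiR) \<otimes>L (psiS \<otimes>L idL)) \<otimes>L idL)) \<circ>L tw_g1"
    using g1_nat[of idL idL psiR psiS idL idL] by simp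
  have s2: "(idL \<otimes>L ((tauC' \<otimes>L tauD') \<otimes>L idL)) \<circ>L (idL \<otimes>L (((idL \<otimes>L psiR) \<otimes>L (psiS \<otimes>L idL)) \<otimes>L idL)) = (idL \<otimes>L (((psiR \<otimes>L idL) \<otimes>L (idL \<otimes>L psiS)) \<otimes>L idL)) \<circ>L (idL \<otimes>L ((tauC \<otimes>L tauD) \<otimes>L idL))"
    by (simp add: tensL_comp psiR_tw psiS_tw)
  have s3: "tw_g2 \<circ>L (idL \<otimes>L (((psiR \<otimes>L idL) \<otimes>L (idL \<otimes>L psiS)) \<otimes>L idL)) = (idL \<otimes>L (psiR \<otimes>L (idL \<otimes>L (psiS \<otimes>L idL)))) \<circ>L tw_g2"
    using g2_nat[of idL psiR idL idL psiS idL] by simp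
  have s4: "(idL \<otimes>L (idL \<otimes>L (tau \<otimes>L idL))) \<circ>L (idL \<otimes>L (psiR \<otimes>L (idL \<otimes>L (psiS \<otimes>L idL)))) = (idL \<otimes>L (psiR \<otimes>L (idL \<otimes>L (psiS \<otimes>L idL)))) \<circ>L (idL \<otimes>L (idL \<otimes>L (tau \<otimes>L idL)))"
    by (simp add: tensL_comp)
  have s5: "tw_g3 \<circ>L (idL \<otimes>L (psiR \<otimes>L (idL \<otimes>L (psiS \<otimes>L idL)))) = ((idL \<otimes>L (psiR \<otimes>L idL)) \<otimes>L (idL \<otimes>L (psiS \<otimes>L idL))) \<circ>L tw_g3"
    using g3_nat[of idL psiR idL idL psiS idL] by simp
  have s6: "(rhoC' \<otimes>L rhoD') \<circ>L ((idL \<otimes>L (psiR \<otimes>L idL)) \<otimes>L (idL \<otimes>L (psiS \<otimes>L idL))) = (psiR \<otimes>L psiS) \<circ>L (rhoC \<otimes>L rhoD)"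
    by (simp add: tensL_comp rhoR rhoS)
  have P4: "(psiR \<otimes>L psiS) \<circ>L tw_act tau rhoC rhoD tauC tauD = tw_act tau rhoC' rhoD' tauC' tauD' \<circ>L (idL \<otimes>L ((psiR \<otimes>L psiS) \<otimes>L idL))"
    unfolding tw_act_def
    by (simp only: compL_assoc s1 comp_rewr[OF s2] comp_rewr[OF s3] comp_rewr[OF s4] comp_rewr[OF s5] comp_rewr[OF s6])
  show ?thesis unfolding res_map_def using P1 P2 P3 P4 by blast
qed

end
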